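(* $$\{\varphi\in\mathrm{End}_K(P_n)\mid [x_1,\varphi]\in F_n,\dots,[x_n,\varphi]\in F_n\}=\begin{cases}\mathbb{S}_1 & n=1,\\ P_n+F_n & n>1,\end{cases}$$ where $P_n=K[x_1,\dots,x_n]\subset\mathbb{S}_n$.
   Context: $K$ is a field of characteristic zero. $\mathbb{S}_n$ is the $K$-algebra generated by $x_1,\dots,x_n,y_1,\dots,y_n$ with defining relations $y_ix_i=1$ and $[x_i,y_j]=[x_i,x_j]=[y_i,y_j]=0$ for $i\ne j$; it acts faithfully on $P_n=K[x_1,\dots,x_n]$ by $x_i*x^\alpha=x^{\alpha+e_i}$, $y_i*x^\alpha=x^{\alpha-e_i}$ if $\alpha_i>0$ and $0$ otherwise, so $\mathbb{S}_n\subset\mathrm{End}_K(P_n)$. For $k,l\in\mathbb{N}$, $E_{kl}(i):=x_i^ky_i^l-x_i^{k+1}y_i^{l+1}$; for $\alpha,\beta\in\mathbb{N}^n$, $E_{\alpha\beta}:=\prod_{i=1}^nE_{\alpha_i\beta_i}(i)$ (so $E_{\alpha\beta}*x^\gamma=\delta_{\beta\gamma}x^\alpha$), and $F_n:=\bigoplus_{\alpha,\beta\in\mathbb{N}^n}KE_{\alpha\beta}$. *)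

theory Defs
  imports "HOL-Library.Poly_Mapping"
begin

text \<open>Monomials x^alpha are represented by exponent vectors alpha :: nat =>0 nat;
  the variables x_1,...,x_n correspond to indices 0,...,n-1.
  Polynomials are finitely supported coefficient functions on monomials.\<close>

type_synonym 'k pol = "(nat \<Rightarrow>\<^sub>0 nat) \<Rightarrow>\<^sub>0 'k"

definition monoms :: "nat \<Rightarrow> (nat \<Rightarrow>\<^sub>0 nat) set" where
  "monoms n = {\<alpha>. Poly_Mapping.keys \<alpha> \<subseteq> {..<n}}"

definition Pn :: "nat \<Rightarrow> ('k::field_char_0) pol set" where
  "Pn n = {p. Poly_Mapping.keys p \<subseteq> monoms n}"

definition smul :: "'k::field_char_0 \<Rightarrow> 'k pol \<Rightarrow> 'k pol" where
  "smul c p = Poly_Mapping.single 0 c * p"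

text \<open>End_K(P_n): K-linear maps P_n -> P_n (extended by 0 outside P_n, so that
  each endomorphism has a unique representative).\<close>
definition EndK :: "nat \<Rightarrow> (('k::field_char_0) pol \<Rightarrow> 'k pol) set" where
  "EndK n = {\<phi>. (\<forall>p\<in>Pn n. \<phi> p \<in> Pn n)
               \<and> (\<forall>p\<in>Pn n. \<forall>q\<in>Pn n. \<phi> (p + q) = \<phi> p + \<phi> q)
               \<and> (\<forall>c. \<forall>p\<in>Pn n. \<phi> (smul c p) = smul c (\<phi> p))
               \<and> (\<forall>p. p \<notin> Pn n \<longrightarrow> \<phi> p = 0)}"

definition restr :: "nat \<Rightarrow> (('k::field_char_0) pol \<Rightarrow> 'k pol) \<Rightarrow> 'k pol \<Rightarrow> 'k pol" where
  "restr n f = (\<lambda>p. if p \<in> Pn n then f p else 0)"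

definition mult_op :: "nat \<Rightarrow> ('k::field_char_0) pol \<Rightarrow> 'k pol \<Rightarrow> 'k pol" where
  "mult_op n a = restr n (\<lambda>p. a * p)"

definition xop :: "nat \<Rightarrow> nat \<Rightarrow> ('k::field_char_0) pol \<Rightarrow> 'k pol" where
  "xop n i = mult_op n (Poly_Mapping.single (Poly_Mapping.single i 1) 1)"

definition yop :: "nat \<Rightarrow> nat \<Rightarrow> ('k::field_char_0) pol \<Rightarrow> 'k pol" where
  "yop n i = restr n (\<lambda>q. \<Sum>\<alpha>\<in>Poly_Mapping.keys q.
      if Poly_Mapping.lookup \<alpha> i > 0 then Poly_Mapping.single (\<alpha> - Poly_Mapping.single i 1) (Poly_Mapping.lookup q \<alpha>)
      else 0)"

definition op_add :: "('k::field_char_0 pol \<Rightarrow> 'k pol) \<Rightarrow> ('k pol \<Rightarrow> 'k pol) \<Rightarrow> 'k pol \<Rightarrow> 'k pol" where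
  "op_add f g = (\<lambda>p. f p + g p)"

definition op_diff :: "('k::field_char_0 pol \<Rightarrow> 'k pol) \<Rightarrow> ('k pol \<Rightarrow> 'k pol) \<Rightarrow> 'k pol \<Rightarrow> 'k pol" where
  "op_diff f g = (\<lambda>p. f p - g p)"

definition op_smul :: "'k::field_char_0 \<Rightarrow> ('k pol \<Rightarrow> 'k pol) \<Rightarrow> 'k pol \<Rightarrow> 'k pol" where
  "op_smul c f = (\<lambda>p. smul c (f p))"

definition commut :: "('k::field_char_0 pol \<Rightarrow> 'k pol) \<Rightarrow> ('k pol \<Rightarrow> 'k pol) \<Rightarrow> 'k pol \<Rightarrow> 'k pol" where
  "commut a b = op_diff (a \<circ> b) (b \<circ> a)"

text \<open>The identity of End_K(P_n), and S_n as the subalgebra of End_K(P_n) generated by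
  x_1,...,x_n,y_1,...,y_n (S_n acts faithfully on P_n).\<close>
definition idop :: "nat \<Rightarrow> ('k::field_char_0) pol \<Rightarrow> 'k pol" where
  "idop n = restr n id"

inductive_set Sn :: "nat \<Rightarrow> ('k::field_char_0 pol \<Rightarrow> 'k pol) set" for n where
  S_one: "idop n \<in> Sn n"
| S_x: "i < n \<Longrightarrow> xop n i \<in> Sn n"
| S_y: "i < n \<Longrightarrow> yop n i \<in> Sn n"
| S_add: "f \<in> Sn n \<Longrightarrow> g \<in> Sn n \<Longrightarrow> op_add f g \<in> Sn n"
| S_smul: "f \<in> Sn n \<Longrightarrow> op_smul c f \<in> Sn n"
| S_comp: "f \<in> Sn n \<Longrightarrow> g \<in> Sn n \<Longrightarrow> f \<circ> g \<in> Sn n"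

definition E1 :: "nat \<Rightarrow> nat \<Rightarrow> nat \<Rightarrow> nat \<Rightarrow> ('k::field_char_0) pol \<Rightarrow> 'k pol" where
  "E1 n k l i = op_diff ((xop n i ^^ k) \<circ> (yop n i ^^ l) \<circ> idop n)
                        ((xop n i ^^ (k+1)) \<circ> (yop n i ^^ (l+1)) \<circ> idop n)"

definition Eab :: "nat \<Rightarrow> (nat \<Rightarrow>\<^sub>0 nat) \<Rightarrow> (nat \<Rightarrow>\<^sub>0 nat) \<Rightarrow> ('k::field_char_0) pol \<Rightarrow> 'k pol" where
  "Eab n \<alpha> \<beta> = foldr (\<lambda>i f. E1 n (Poly_Mapping.lookup \<alpha> i) (Poly_Mapping.lookup \<beta> i) i \<circ> f) [0..<n] (idop n)"

definition Fn :: "nat \<Rightarrow> ('k::field_char_0 pol \<Rightarrow> 'k pol) set" where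
  "Fn n = {(\<lambda>p. \<Sum>ab\<in>S. smul (c ab) (Eab n (fst ab) (snd ab) p)) | S c.
             finite S \<and> S \<subseteq> monoms n \<times> monoms n}"

definition PplusF :: "nat \<Rightarrow> ('k::field_char_0 pol \<Rightarrow> 'k pol) set" where
  "PplusF n = {op_add (mult_op n a) f | a f. a \<in> Pn n \<and> f \<in> Fn n}"

end

theory Submission imports Defs "HOL-Library.FuncSet" begin

abbreviation lk where "lk \<equiv> Poly_Mapping.lookup"
abbreviation ks where "ks \<equiv> Poly_Mapping.keys"
abbreviation sg where "sg \<equiv> Poly_Mapping.single"

lemma lookup_smul[simp]: "lk (smul c p) a = c * lk p a"
  unfolding smul_def mult_map_scale_conv_mult[symmetric] by (simp add: map.rep_eq when_def)

lemma smul_add: "smul c (p + q) = smul c p + smul c q"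
  by (rule poly_mapping_eqI) (simp add: lookup_add algebra_simps)
lemma smul_zero[simp]: "smul c 0 = 0"
  by (rule poly_mapping_eqI) simp
lemma smul_zero_left[simp]: "smul 0 p = 0"
  by (rule poly_mapping_eqI) simp
lemma smul_one[simp]: "smul 1 p = p"
  by (rule poly_mapping_eqI) simp
lemma smul_smul: "smul c (smul d p) = smul (c*d) p"
  by (rule poly_mapping_eqI) simp
lemma smul_single: "smul c (sg a d) = sg a (c*d)"
  by (rule poly_mapping_eqI) (simp add: lookup_single when_def)
lemma smul_minus1: "smul (-1) p = - p"
  by (rule poly_mapping_eqI) simp
lemma smul_diff: "smul c (p - q) = smul c p - smul c q"
  by (rule poly_mapping_eqI) (simp add: lookup_minus algebra_simps)
lemma smul_sum: "smul c (sum f A) = sum (\<lambda>x. smul c (f x)) A"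
  by (rule poly_mapping_eqI) (simp add: lookup_sum sum_distrib_left)
lemma smul_mult: "smul c (a * p) = a * smul c p"
  unfolding smul_def by (simp add: mult.left_commute)
lemma keys_smul: "ks (smul c p) \<subseteq> ks p"
  by (auto simp: in_keys_iff)

lemma poly_expand: "p = (\<Sum>g\<in>ks p. sg g (lk p g))"
  by (rule poly_mapping_eqI) (simp add: lookup_sum lookup_single when_def in_keys_iff)

abbreviation mn :: "(nat \<Rightarrow>\<^sub>0 nat) \<Rightarrow> 'k::field_char_0 pol" where "mn g \<equiv> sg g 1"

lemma monomsI: "ks a \<subseteq> {..<n} \<Longrightarrow> a \<in> monoms n" by (simp add: monoms_def)
lemma monoms_zero[simp]: "0 \<in> monoms n" by (simp add: monoms_def)
lemma monoms_out: "a \<in> monoms n \<Longrightarrow> j \<ge> n \<Longrightarrow> lk a j = 0"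
  by (auto simp: monoms_def in_keys_iff)
lemma monoms_iff: "a \<in> monoms n \<longleftrightarrow> (\<forall>j\<ge>n. lk a j = 0)"
  by (auto simp: monoms_def in_keys_iff) (metis leI less_numeral_extra(3))
lemma monoms_add[simp]: "a \<in> monoms n \<Longrightarrow> b \<in> monoms n \<Longrightarrow> a + b \<in> monoms n"
  by (simp add: monoms_iff lookup_add)
lemma monoms_minus[simp]: "a \<in> monoms n \<Longrightarrow> a - b \<in> monoms n"
  by (simp add: monoms_iff lookup_minus)
lemma monoms_single[simp]: "i < n \<Longrightarrow> sg i k \<in> monoms n"
  by (simp add: monoms_iff lookup_single when_def)
lemma monoms_eq: "a \<in> monoms n \<Longrightarrow> b \<in> monoms n \<Longrightarrow> (\<forall>j<n. lk a j = lk b j) \<Longrightarrow> a = b"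
  by (rule poly_mapping_eqI) (metis leI monoms_out)

lemma Pn_iff: "p \<in> Pn n \<longleftrightarrow> ks p \<subseteq> monoms n" by (simp add: Pn_def)
lemma Pn_zero[simp]: "0 \<in> Pn n" by (simp add: Pn_def)
lemma Pn_add[simp]: "p \<in> Pn n \<Longrightarrow> q \<in> Pn n \<Longrightarrow> p + q \<in> Pn n"
  using keys_add[of p q] by (auto simp: Pn_def)
lemma Pn_smul[simp]: "p \<in> Pn n \<Longrightarrow> smul c p \<in> Pn n"
  using keys_smul[of c p] by (auto simp: Pn_def)
lemma Pn_uminus[simp]: "p \<in> Pn n \<Longrightarrow> - p \<in> Pn n"
  by (simp add: Pn_def)
lemma Pn_diff[simp]: "p \<in> Pn n \<Longrightarrow> q \<in> Pn n \<Longrightarrow> p - q \<in> Pn n"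
  by (metis Pn_add Pn_uminus diff_conv_add_uminus)
lemma Pn_single[simp]: "a \<in> monoms n \<Longrightarrow> sg a c \<in> Pn n"
  by (simp add: Pn_def)
lemma Pn_sum: "(\<And>x. x \<in> A \<Longrightarrow> f x \<in> Pn n) \<Longrightarrow> sum f A \<in> Pn n"
  by (induction A rule: infinite_finite_induct) auto
lemma Pn_mult[simp]: "p \<in> Pn n \<Longrightarrow> q \<in> Pn n \<Longrightarrow> p * q \<in> Pn n"
  using keys_mult[of p q] by (fastforce simp: Pn_def)
lemma Pn_keys: "p \<in> Pn n \<Longrightarrow> a \<in> ks p \<Longrightarrow> a \<in> monoms n"
  by (auto simp: Pn_def)

lemma smul_mn: "smul c (mn a) = sg a c" by (simp add: smul_single)

lemma mn_mult: "mn a * mn b = mn (a + b)" by (simp add: mult_single)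

lemma EndK_in: "\<phi> \<in> EndK n \<Longrightarrow> p \<in> Pn n \<Longrightarrow> \<phi> p \<in> Pn n" by (simp add: EndK_def)
lemma EndK_add: "\<phi> \<in> EndK n \<Longrightarrow> p \<in> Pn n \<Longrightarrow> q \<in> Pn n \<Longrightarrow> \<phi> (p + q) = \<phi> p + \<phi> q" by (simp add: EndK_def)
lemma EndK_smul: "\<phi> \<in> EndK n \<Longrightarrow> p \<in> Pn n \<Longrightarrow> \<phi> (smul c p) = smul c (\<phi> p)" by (simp add: EndK_def)
lemma EndK_out: "\<phi> \<in> EndK n \<Longrightarrow> p \<notin> Pn n \<Longrightarrow> \<phi> p = 0" by (simp add: EndK_def)
lemma EndK_zero: "\<phi> \<in> EndK n \<Longrightarrow> \<phi> 0 = 0"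
  using EndK_smul[of \<phi> n 0 0] by simp
lemma EndK_sum: "\<phi> \<in> EndK n \<Longrightarrow> (\<And>x. x \<in> A \<Longrightarrow> f x \<in> Pn n) \<Longrightarrow> \<phi> (sum f A) = (\<Sum>x\<in>A. \<phi> (f x))"
proof (induction A rule: infinite_finite_induct)
  case (infinite A) then show ?case by (simp add: EndK_zero)
next
  case empty then show ?case by (simp add: EndK_zero)
next
  case (insert x F) then show ?case by (simp add: EndK_add Pn_sum)
qed
lemma EndK_diff: "\<phi> \<in> EndK n \<Longrightarrow> p \<in> Pn n \<Longrightarrow> q \<in> Pn n \<Longrightarrow> \<phi> (p - q) = \<phi> p - \<phi> q"
proof -
  assume a: "\<phi> \<in> EndK n" "p \<in> Pn n" "q \<in> Pn n"
  have "p - q = p + smul (-1) q" by (simp add: smul_minus1)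
  then have "\<phi> (p - q) = \<phi> (p + smul (-1) q)" by (rule arg_cong)
  also have "\<dots> = \<phi> p + smul (-1) (\<phi> q)" using a EndK_add[of \<phi> n p "smul (-1) q"] EndK_smul[of \<phi> n q "-1"] by simp
  also have "\<dots> = \<phi> p - \<phi> q" by (simp add: smul_minus1)
  finally show ?thesis .
qed
lemma EndK_single: "\<phi> \<in> EndK n \<Longrightarrow> a \<in> monoms n \<Longrightarrow> \<phi> (sg a c) = smul c (\<phi> (mn a))"
  by (metis EndK_smul Pn_single smul_mn)

lemma EndK_expand: "\<phi> \<in> EndK n \<Longrightarrow> p \<in> Pn n \<Longrightarrow> \<phi> p = (\<Sum>g\<in>ks p. smul (lk p g) (\<phi> (mn g)))"
proof -
  assume a: "\<phi> \<in> EndK n" "p \<in> Pn n"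
  have "\<phi> p = \<phi> (\<Sum>g\<in>ks p. sg g (lk p g))" using poly_expand[of p] by simp
  also have "\<dots> = (\<Sum>g\<in>ks p. \<phi> (sg g (lk p g)))"
    using a by (intro EndK_sum) (auto intro: Pn_keys Pn_single)
  also have "\<dots> = (\<Sum>g\<in>ks p. smul (lk p g) (\<phi> (mn g)))"
    using a by (intro sum.cong refl EndK_single) (auto intro: Pn_keys)
  finally show ?thesis .
qed

lemma EndK_ext: "\<phi> \<in> EndK n \<Longrightarrow> \<chi> \<in> EndK n \<Longrightarrow> (\<And>g. g \<in> monoms n \<Longrightarrow> \<phi> (mn g) = \<chi> (mn g)) \<Longrightarrow> \<phi> = \<chi>"
proof (rule ext)
  fix p assume a: "\<phi> \<in> EndK n" "\<chi> \<in> EndK n" "\<And>g. g \<in> monoms n \<Longrightarrow> \<phi> (mn g) = \<chi> (mn g)"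
  show "\<phi> p = \<chi> p"
  proof (cases "p \<in> Pn n")
    case True
    then have "\<phi> p = (\<Sum>g\<in>ks p. smul (lk p g) (\<phi> (mn g)))" "\<chi> p = (\<Sum>g\<in>ks p. smul (lk p g) (\<chi> (mn g)))"
      using a EndK_expand by blast+
    then show ?thesis using a True Pn_keys by (metis (no_types, lifting) sum.cong)
  next
    case False then show ?thesis using a by (simp add: EndK_out)
  qed
qed

lemma EndKI:
  assumes "\<And>p. p \<in> Pn n \<Longrightarrow> \<phi> p \<in> Pn n"
    "\<And>p q. p \<in> Pn n \<Longrightarrow> q \<in> Pn n \<Longrightarrow> \<phi> (p + q) = \<phi> p + \<phi> q"
    "\<And>c p. p \<in> Pn n \<Longrightarrow> \<phi> (smul c p) = smul c (\<phi> p)"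
    "\<And>p. p \<notin> Pn n \<Longrightarrow> \<phi> p = 0"
  shows "\<phi> \<in> EndK n"
  using assms by (simp add: EndK_def)

lemma EndK_op_add: "f \<in> EndK n \<Longrightarrow> g \<in> EndK n \<Longrightarrow> op_add f g \<in> EndK n"
  by (rule EndKI) (auto simp: op_add_def EndK_in EndK_add EndK_smul EndK_out smul_add)
lemma EndK_op_diff: "f \<in> EndK n \<Longrightarrow> g \<in> EndK n \<Longrightarrow> op_diff f g \<in> EndK n"
  by (rule EndKI) (auto simp: op_diff_def EndK_in EndK_add EndK_smul EndK_out smul_diff)
lemma EndK_op_smul: "f \<in> EndK n \<Longrightarrow> op_smul c f \<in> EndK n"
  by (rule EndKI) (auto simp: op_smul_def EndK_in EndK_add EndK_smul EndK_out smul_add smul_smul mult.commute)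
lemma EndK_comp: "f \<in> EndK n \<Longrightarrow> g \<in> EndK n \<Longrightarrow> f \<circ> g \<in> EndK n"
  by (rule EndKI) (auto simp: EndK_in EndK_add EndK_smul EndK_out EndK_zero)
lemma EndK_zerof: "(\<lambda>p. 0) \<in> EndK n"
  by (rule EndKI) auto
lemma EndK_sumf: "(\<And>s. s \<in> S \<Longrightarrow> F s \<in> EndK n) \<Longrightarrow> (\<lambda>p. \<Sum>s\<in>S. F s p) \<in> EndK n"
proof (rule EndKI)
  assume a: "\<And>s. s \<in> S \<Longrightarrow> F s \<in> EndK n"
  show "\<And>p. p \<in> Pn n \<Longrightarrow> (\<Sum>s\<in>S. F s p) \<in> Pn n" using a by (auto simp: EndK_in intro!: Pn_sum)
  show "\<And>p q. p \<in> Pn n \<Longrightarrow> q \<in> Pn n \<Longrightarrow> (\<Sum>s\<in>S. F s (p + q)) = (\<Sum>s\<in>S. F s p) + (\<Sum>s\<in>S. F s q)"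
    using a by (simp add: EndK_add sum.distrib[symmetric] del: sum.distrib) (rule sum.cong, simp, metis EndK_add)
  show "\<And>c p. p \<in> Pn n \<Longrightarrow> (\<Sum>s\<in>S. F s (smul c p)) = smul c (\<Sum>s\<in>S. F s p)"
    using a by (simp add: smul_sum) (rule sum.cong, simp, metis EndK_smul)
  show "\<And>p. p \<notin> Pn n \<Longrightarrow> (\<Sum>s\<in>S. F s p) = 0"
    using a by (metis (no_types, lifting) EndK_out sum.neutral)
qed
lemma EndK_restr: "(\<And>p. p \<in> Pn n \<Longrightarrow> f p \<in> Pn n) \<Longrightarrow>
    (\<And>p q. p \<in> Pn n \<Longrightarrow> q \<in> Pn n \<Longrightarrow> f (p + q) = f p + f q) \<Longrightarrow>
    (\<And>c p. p \<in> Pn n \<Longrightarrow> f (smul c p) = smul c (f p)) \<Longrightarrow> restr n f \<in> EndK n"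
  by (rule EndKI) (auto simp: restr_def)
lemma EndK_idop: "idop n \<in> EndK n"
  unfolding idop_def by (rule EndK_restr) auto
lemma idop_mn[simp]: "g \<in> monoms n \<Longrightarrow> idop n (mn g) = mn g"
  by (simp add: idop_def restr_def)
lemma EndK_mult_op: "a \<in> Pn n \<Longrightarrow> mult_op n a \<in> EndK n"
  unfolding mult_op_def by (rule EndK_restr) (auto simp: distrib_left smul_mult)
lemma mult_op_mn: "g \<in> monoms n \<Longrightarrow> mult_op n a (mn g) = a * mn g"
  by (simp add: mult_op_def restr_def)
lemma mult_op_in: "p \<in> Pn n \<Longrightarrow> mult_op n a p = a * p"
  by (simp add: mult_op_def restr_def)
lemma EndK_xop: "i < n \<Longrightarrow> xop n i \<in> EndK n"
  unfolding xop_def by (rule EndK_mult_op) simp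
lemma xop_in: "p \<in> Pn n \<Longrightarrow> xop n i p = mn (sg i 1) * p"
  by (simp add: xop_def mult_op_in)
lemma xop_mn: "g \<in> monoms n \<Longrightarrow> xop n i (mn g) = mn (g + sg i 1)"
  by (simp add: xop_in mn_mult add.commute)

definition yh :: "nat \<Rightarrow> (nat \<Rightarrow>\<^sub>0 nat) \<Rightarrow> 'k::field_char_0 \<Rightarrow> 'k pol" where
  "yh i a c = (if 0 < lk a i then sg (a - sg i 1) c else 0)"

lemma yop_alt: "yop n i = restr n (\<lambda>q. \<Sum>a\<in>ks q. yh i a (lk q a))"
  by (simp add: yop_def yh_def)

lemma yh_super: "finite A \<Longrightarrow> ks q \<subseteq> A \<Longrightarrow> (\<Sum>a\<in>ks q. yh i a (lk q a)) = (\<Sum>a\<in>A. yh i a (lk q a))"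
  by (rule sum.mono_neutral_left) (auto simp: yh_def in_keys_iff)

lemma EndK_yop: "yop n i \<in> EndK n"
  unfolding yop_alt
proof (rule EndK_restr)
  fix p :: "'a pol" assume p: "p \<in> Pn n"
  show "(\<Sum>a\<in>ks p. yh i a (lk p a)) \<in> Pn n"
    using p by (auto simp: yh_def intro!: Pn_sum Pn_single dest: Pn_keys)
next
  fix p q :: "'a pol" assume "p \<in> Pn n" "q \<in> Pn n"
  let ?A = "ks p \<union> ks q"
  have "(\<Sum>a\<in>ks (p+q). yh i a (lk (p+q) a)) = (\<Sum>a\<in>?A. yh i a (lk (p+q) a))"
    using keys_add[of p q] by (intro yh_super) auto
  also have "\<dots> = (\<Sum>a\<in>?A. yh i a (lk p a) + yh i a (lk q a))"
    by (rule sum.cong) (auto simp: yh_def lookup_add single_add)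
  also have "\<dots> = (\<Sum>a\<in>?A. yh i a (lk p a)) + (\<Sum>a\<in>?A. yh i a (lk q a))"
    by (simp add: sum.distrib)
  also have "\<dots> = (\<Sum>a\<in>ks p. yh i a (lk p a)) + (\<Sum>a\<in>ks q. yh i a (lk q a))"
    using yh_super[of ?A p i] yh_super[of ?A q i] by simp
  finally show "(\<Sum>a\<in>ks (p+q). yh i a (lk (p+q) a)) = (\<Sum>a\<in>ks p. yh i a (lk p a)) + (\<Sum>a\<in>ks q. yh i a (lk q a))" .
next
  fix c and p :: "'a pol" assume "p \<in> Pn n"
  have "(\<Sum>a\<in>ks (smul c p). yh i a (lk (smul c p) a)) = (\<Sum>a\<in>ks p. yh i a (lk (smul c p) a))"
    using keys_smul[of c p] by (intro yh_super) auto
  also have "\<dots> = (\<Sum>a\<in>ks p. smul c (yh i a (lk p a)))"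
    by (rule sum.cong) (auto simp: yh_def smul_single)
  finally show "(\<Sum>a\<in>ks (smul c p). yh i a (lk (smul c p) a)) = smul c (\<Sum>a\<in>ks p. yh i a (lk p a))"
    by (simp add: smul_sum)
qed

lemma yop_mn: "g \<in> monoms n \<Longrightarrow> yop n i (mn g) = (if 0 < lk g i then mn (g - sg i 1) else 0)"
  by (simp add: yop_alt restr_def yh_def)

lemma xpow_mn: "g \<in> monoms n \<Longrightarrow> i < n \<Longrightarrow> (xop n i ^^ k) (mn g) = mn (g + sg i k)"
proof (induction k)
  case 0 then show ?case by simp
next
  case (Suc k)
  have "sg i k + sg i 1 = sg i (Suc k)" by (simp add: single_add[symmetric])
  then show ?case using Suc by (simp add: xop_mn add.assoc)
qed

lemma ypow_mn: "g \<in> monoms n \<Longrightarrow> (yop n i ^^ l) (mn g) = (if l \<le> lk g i then mn (g - sg i l) else 0)"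
proof (induction l)
  case 0 then show ?case by simp
next
  case (Suc l)
  have e: "g - sg i l - sg i (Suc 0) = g - sg i (Suc l)" if "Suc l \<le> lk g i"
  proof (rule poly_mapping_eqI)
    fix j show "lk (g - sg i l - sg i (Suc 0)) j = lk (g - sg i (Suc l)) j"
      using that by (cases "j = i") (simp_all add: lookup_minus lookup_single)
  qed
  show ?case
  proof (cases "l \<le> lk g i")
    case True
    then show ?thesis using Suc by (auto simp: yop_mn lookup_minus e)
  next
    case False
    then show ?thesis using Suc EndK_zero[OF EndK_yop] by auto
  qed
qed

lemma xop_zero: "xop n i 0 = 0" by (simp add: xop_def mult_op_in)
lemma xpow_zero: "(xop n i ^^ k) 0 = 0" by (induction k) (simp_all add: xop_zero)

lemma E1_part:
  assumes g: "g \<in> monoms n" and i: "i < n"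
  shows "((xop n i ^^ k) \<circ> (yop n i ^^ l) \<circ> idop n) (mn g :: 'k::field_char_0 pol) = (if l \<le> lk g i then mn (g - sg i l + sg i k) else 0)"
  using g i by (simp add: ypow_mn xpow_mn xpow_zero)

lemma E1_mn:
  assumes g: "g \<in> monoms n" and i: "i < n"
  shows "E1 n k l i (mn g :: 'k::field_char_0 pol) = (if lk g i = l then mn (g - sg i l + sg i k) else 0)"
proof -
  have e: "g - sg i (l+1) + sg i (k+1) = g - sg i l + sg i k" if "l + 1 \<le> lk g i"
  proof (rule poly_mapping_eqI)
    fix j show "lk (g - sg i (l+1) + sg i (k+1)) j = lk (g - sg i l + sg i k) j"
      using that by (cases "j = i") (simp_all add: lookup_minus lookup_add lookup_single)
  qed
  have "E1 n k l i (mn g :: 'k pol) = (if l \<le> lk g i then mn (g - sg i l + sg i k) else 0)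
     - (if l + 1 \<le> lk g i then mn (g - sg i (l+1) + sg i (k+1)) else 0)"
    unfolding E1_def op_diff_def E1_part[OF g i] by (rule refl)
  also have "\<dots> = (if lk g i = l then mn (g - sg i l + sg i k) else 0)"
    using e by auto
  finally show ?thesis .
qed

lemma EndK_funpow: "f \<in> EndK n \<Longrightarrow> g \<in> EndK n \<Longrightarrow> (f ^^ k) \<circ> g \<in> EndK n"
proof (induction k)
  case 0 then show ?case by simp
next
  case (Suc k)
  have "(f ^^ Suc k) \<circ> g = f \<circ> ((f ^^ k) \<circ> g)" by (simp add: comp_assoc)
  then show ?case using Suc EndK_comp by metis
qed

lemma EndK_E1: "i < n \<Longrightarrow> E1 n k l i \<in> EndK n"
  unfolding E1_def comp_assoc
  by (intro EndK_op_diff EndK_funpow EndK_xop EndK_yop EndK_idop)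

lemma Eab_aux:
  assumes "distinct L" "set L \<subseteq> {..<n}" "g \<in> monoms n"
  shows "\<exists>g'. g' \<in> monoms n \<and> (\<forall>j. lk g' j = (if j \<in> set L then lk a j else lk g j)) \<and>
     foldr (\<lambda>i f. E1 n (lk a i) (lk b i) i \<circ> f) L (idop n) (mn g :: 'k::field_char_0 pol)
       = (if \<forall>j\<in>set L. lk g j = lk b j then mn g' else 0)"
  using assms
proof (induction L)
  case Nil then show ?case by (intro exI[of _ g]) (simp add: idop_mn)
next
  case (Cons i L)
  have "distinct L" "set L \<subseteq> {..<n}" using Cons.prems by auto
  then obtain g' where g': "g' \<in> monoms n" "\<forall>j. lk g' j = (if j \<in> set L then lk a j else lk g j)"
    "foldr (\<lambda>i f. E1 n (lk a i) (lk b i) i \<circ> f) L (idop n) (mn g :: 'k pol)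
       = (if \<forall>j\<in>set L. lk g j = lk b j then mn g' else 0)" using Cons.IH Cons.prems(3) by blast
  have i: "i < n" "i \<notin> set L" using Cons.prems by auto
  have "lk g' i = lk g i" using g'(2) i by simp
  define g'' where "g'' = g' - sg i (lk g i) + sg i (lk a i)"
  have l'': "\<forall>j. lk g'' j = (if j \<in> set (i # L) then lk a j else lk g j)"
  proof
    fix j show "lk g'' j = (if j \<in> set (i # L) then lk a j else lk g j)"
      using g'(2)[rule_format, of j] i \<open>lk g' i = lk g i\<close>
      by (cases "j = i") (simp_all add: g''_def lookup_minus lookup_add lookup_single)
  qed
  have m'': "g'' \<in> monoms n" using g'(1) i by (simp add: g''_def)
  have "foldr (\<lambda>i f. E1 n (lk a i) (lk b i) i \<circ> f) (i # L) (idop n) (mn g :: 'k pol)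
       = E1 n (lk a i) (lk b i) i (if \<forall>j\<in>set L. lk g j = lk b j then mn g' else 0)"
    using g'(3) by simp
  also have "\<dots> = (if \<forall>j\<in>set (i # L). lk g j = lk b j then mn g'' else 0)"
  proof (cases "\<forall>j\<in>set (i # L). lk g j = lk b j")
    case True
    then have "lk g' i = lk b i" using \<open>lk g' i = lk g i\<close> by simp
    then show ?thesis using True E1_mn[OF g'(1) i(1), of "lk a i" "lk b i"]
      by (simp add: g''_def \<open>lk g' i = lk g i\<close>)
  next
    case False
    show ?thesis
    proof (cases "\<forall>j\<in>set L. lk g j = lk b j")
      case True
      with False have "lk g' i \<noteq> lk b i" using \<open>lk g' i = lk g i\<close> by simp
      then show ?thesis using True False E1_mn[OF g'(1) i(1), of "lk a i" "lk b i"] by simp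
    next
      case F2: False
      show ?thesis by (simp only: if_not_P[OF F2] if_not_P[OF False]) (rule EndK_zero[OF EndK_E1[OF i(1)]])
    qed
  qed
  finally show ?case using l'' m'' by blast
qed

lemma Eab_mn:
  assumes "a \<in> monoms n" "b \<in> monoms n" "g \<in> monoms n"
  shows "Eab n a b (mn g :: 'k::field_char_0 pol) = (if g = b then mn a else 0)"
proof -
  obtain g' where g': "g' \<in> monoms n" "\<forall>j. lk g' j = (if j \<in> {..<n} then lk a j else lk g j)"
    "Eab n a b (mn g :: 'k pol) = (if \<forall>j\<in>{..<n}. lk g j = lk b j then mn g' else 0)"
    using Eab_aux[of "[0..<n]" n g a b] assms by (auto simp: Eab_def atLeast0LessThan)
  have "g' = a" using g'(1,2) assms(1) by (intro monoms_eq) auto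
  moreover have "(\<forall>j\<in>{..<n}. lk g j = lk b j) \<longleftrightarrow> g = b"
    using assms(2,3) monoms_eq[of g n b] by blast
  ultimately show ?thesis using g'(3) by simp
qed

lemma EndK_foldr: "set L \<subseteq> {..<n} \<Longrightarrow> foldr (\<lambda>i f. E1 n (lk a i) (lk b i) i \<circ> f) L (idop n) \<in> (EndK n :: ('k::field_char_0 pol \<Rightarrow> 'k pol) set)"
proof (induction L)
  case Nil then show ?case by (simp add: EndK_idop)
next
  case (Cons i L)
  then have "i < n" "E1 n (lk a i) (lk b i) i \<in> (EndK n :: ('k pol \<Rightarrow> 'k pol) set)" using EndK_E1 by auto
  have e: "foldr (\<lambda>i f. E1 n (lk a i) (lk b i) i \<circ> f) (i # L) (idop n)
     = E1 n (lk a i) (lk b i) i \<circ> foldr (\<lambda>i f. E1 n (lk a i) (lk b i) i \<circ> f) L (idop n)" by simp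
  from Cons.prems have "set L \<subseteq> {..<n}" by simp
  with Cons.IH have "foldr (\<lambda>i f. E1 n (lk a i) (lk b i) i \<circ> f) L (idop n) \<in> (EndK n :: ('k pol \<Rightarrow> 'k pol) set)" by blast
  then show ?case unfolding e using EndK_comp \<open>E1 n (lk a i) (lk b i) i \<in> EndK n\<close> by blast
qed

lemma EndK_Eab: "Eab n a b \<in> (EndK n :: ('k::field_char_0 pol \<Rightarrow> 'k pol) set)"
  unfolding Eab_def by (rule EndK_foldr) auto

lemma Fn_EndK: "\<psi> \<in> Fn n \<Longrightarrow> \<psi> \<in> EndK n"
proof -
  assume "\<psi> \<in> Fn n"
  then obtain S c where \<psi>: "\<psi> = (\<lambda>p. \<Sum>ab\<in>S. smul (c ab) (Eab n (fst ab) (snd ab) p))"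
    unfolding Fn_def by blast
  have "(\<lambda>p. \<Sum>ab\<in>S. op_smul (c ab) (Eab n (fst ab) (snd ab)) p) \<in> EndK n"
    by (rule EndK_sumf) (intro EndK_op_smul EndK_Eab)
  then show ?thesis unfolding \<psi> op_smul_def .
qed

lemma Fn_fin: "\<psi> \<in> Fn n \<Longrightarrow> \<exists>C. finite C \<and> (\<forall>g\<in>monoms n. g \<notin> C \<longrightarrow> \<psi> (mn g) = 0)"
proof -
  assume "\<psi> \<in> Fn n"
  then obtain S c where \<psi>: "\<psi> = (\<lambda>p. \<Sum>ab\<in>S. smul (c ab) (Eab n (fst ab) (snd ab) p))"
    and S: "finite S" "S \<subseteq> monoms n \<times> monoms n"
    unfolding Fn_def by blast
  have "\<psi> (mn g) = 0" if g: "g \<in> monoms n" "g \<notin> snd ` S" for g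
  proof -
    have "\<And>ab. ab \<in> S \<Longrightarrow> Eab n (fst ab) (snd ab) (mn g) = 0"
      using S g Eab_mn by (metis (no_types, lifting) SigmaE imageI prod.sel subsetD)
    then show ?thesis unfolding \<psi> by (metis (no_types, lifting) smul_zero sum.neutral)
  qed
  then show ?thesis using S by blast
qed

lemma Fn_intro:
  assumes \<psi>: "\<psi> \<in> EndK n" and C: "finite C" and z: "\<And>g. g \<in> monoms n \<Longrightarrow> g \<notin> C \<Longrightarrow> \<psi> (mn g) = 0"
  shows "\<psi> \<in> Fn n"
proof -
  define S where "S = (\<Union>g\<in>C \<inter> monoms n. (\<lambda>a. (a,g)) ` ks (\<psi> (mn g)))"
  define c where "c ab = lk (\<psi> (mn (snd ab))) (fst ab)" for ab
  have fS: "finite S" using C by (simp add: S_def)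
  have sS: "S \<subseteq> monoms n \<times> monoms n"
  proof -
    have "\<And>g. g \<in> monoms n \<Longrightarrow> \<psi> (mn g) \<in> Pn n" using EndK_in[OF \<psi>] Pn_single by blast
    then show ?thesis by (auto simp: S_def intro: Pn_keys)
  qed
  define F where "F = (\<lambda>p. \<Sum>ab\<in>S. smul (c ab) (Eab n (fst ab) (snd ab) p))"
  have FE: "F \<in> EndK n"
  proof -
    have "(\<lambda>p. \<Sum>ab\<in>S. op_smul (c ab) (Eab n (fst ab) (snd ab)) p) \<in> EndK n"
      by (rule EndK_sumf) (intro EndK_op_smul EndK_Eab)
    then show ?thesis unfolding F_def op_smul_def .
  qed
  have "\<psi> = F"
  proof (rule EndK_ext[OF \<psi> FE])
    fix g assume g: "g \<in> monoms n"
    show "\<psi> (mn g) = F (mn g)"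
    proof (rule poly_mapping_eqI)
      fix b
      have "lk (F (mn g)) b = (\<Sum>ab\<in>S. c ab * lk (Eab n (fst ab) (snd ab) (mn g)) b)"
        by (simp add: F_def lookup_sum)
      also have "\<dots> = (\<Sum>ab\<in>S. if ab = (b, g) then c ab else 0)"
      proof (rule sum.cong)
        fix ab assume "ab \<in> S"
        then have "fst ab \<in> monoms n" "snd ab \<in> monoms n" using sS by auto
        then show "c ab * lk (Eab n (fst ab) (snd ab) (mn g)) b = (if ab = (b, g) then c ab else 0)"
          using g by (cases ab) (simp add: Eab_mn lookup_single when_def)
      qed simp
      also have "\<dots> = (if (b,g) \<in> S then c (b,g) else 0)"
        using fS by (simp add: sum.delta')
      also have "\<dots> = lk (\<psi> (mn g)) b"
      proof -
        have mem: "(b,g) \<in> S \<longleftrightarrow> g \<in> C \<and> b \<in> ks (\<psi> (mn g))" using g unfolding S_def by blast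
        show ?thesis
        proof (cases "g \<in> C")
          case True
          then show ?thesis using mem by (simp add: c_def in_keys_iff)
        next
          case False
          then show ?thesis using g z mem by simp
        qed
      qed
      finally show "lk (\<psi> (mn g)) b = lk (F (mn g)) b" by simp
    qed
  qed
  then show ?thesis unfolding Fn_def F_def using fS sS by blast
qed

lemma Fn_iff: "\<psi> \<in> Fn n \<longleftrightarrow> \<psi> \<in> EndK n \<and> (\<exists>C. finite C \<and> (\<forall>g\<in>monoms n. g \<notin> C \<longrightarrow> \<psi> (mn g) = 0))"
proof
  assume "\<psi> \<in> Fn n" then show "\<psi> \<in> EndK n \<and> (\<exists>C. finite C \<and> (\<forall>g\<in>monoms n. g \<notin> C \<longrightarrow> \<psi> (mn g) = 0))"
    using Fn_EndK Fn_fin by blast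
next
  assume "\<psi> \<in> EndK n \<and> (\<exists>C. finite C \<and> (\<forall>g\<in>monoms n. g \<notin> C \<longrightarrow> \<psi> (mn g) = 0))"
  then show "\<psi> \<in> Fn n" using Fn_intro by blast
qed

lemma commut_mn:
  assumes "\<phi> \<in> EndK n" "g \<in> monoms n" "i < n"
  shows "commut (xop n i) \<phi> (mn g) = mn (sg i 1) * \<phi> (mn g) - \<phi> (mn (g + sg i 1))"
proof -
  have "xop n i (\<phi> (mn g)) = mn (sg i 1) * \<phi> (mn g)"
    using assms by (intro xop_in EndK_in[OF assms(1)]) simp
  moreover have "xop n i (mn g) = (mn (g + sg i 1) :: 'a pol)" using assms(2) by (rule xop_mn)
  moreover have "commut (xop n i) \<phi> (mn g) = xop n i (\<phi> (mn g)) - \<phi> (xop n i (mn g))"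
    unfolding commut_def op_diff_def by simp
  ultimately show ?thesis by simp
qed

lemma monoms_induct_aux:
  assumes P0: "P 0" and PS: "\<And>d j. d \<in> monoms n \<Longrightarrow> j < n \<Longrightarrow> P d \<Longrightarrow> P (d + sg j 1)"
  shows "d \<in> monoms n \<Longrightarrow> (\<Sum>j<n. lk d j) = k \<Longrightarrow> P d"
proof (induction k arbitrary: d)
  case 0
  then have "\<forall>j<n. lk d j = 0" by simp
  then have "d = 0" using 0 by (intro poly_mapping_eqI) (metis leI lookup_zero monoms_out)
  then show ?case using P0 by simp
next
  case (Suc k)
  then obtain j where j: "j < n" "lk d j > 0"
    by (metis lessThan_iff less_numeral_extra(3) nat.distinct(1) neq0_conv sum.neutral)
  define d' where "d' = d - sg j 1"
  have dd: "d = d' + sg j 1"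
  proof (rule poly_mapping_eqI)
    fix i show "lk d i = lk (d' + sg j 1) i"
      using j by (cases "i = j") (simp_all add: d'_def lookup_add lookup_minus lookup_single)
  qed
  have m: "d' \<in> monoms n" using Suc by (simp add: d'_def)
  have "(\<Sum>i<n. lk d i) = (\<Sum>i<n. lk d' i) + (\<Sum>i<n. lk (sg j 1) i)"
    by (subst dd) (simp add: lookup_add sum.distrib)
  also have "(\<Sum>i<n. lk (sg j 1) i) = (1::nat)"
    using j by (simp add: lookup_single when_def)
  finally have "(\<Sum>i<n. lk d' i) = k" using Suc by simp
  then have "P d'" using Suc.IH m by blast
  then show ?case using PS[OF m j(1)] dd by simp
qed

lemma monoms_induct:
  assumes "d \<in> monoms n" "P 0" "\<And>d j. d \<in> monoms n \<Longrightarrow> j < n \<Longrightarrow> P d \<Longrightarrow> P (d + sg j 1)"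
  shows "P d"
  using monoms_induct_aux[of P n d] assms by blast

lemma shift:
  assumes \<phi>: "\<phi> \<in> EndK n"
    and H: "\<forall>g i. g \<in> monoms n \<longrightarrow> i < n \<longrightarrow> (\<exists>j<n. M \<le> lk g j) \<longrightarrow> \<phi> (mn (g + sg i 1)) = mn (sg i 1) * \<phi> (mn g)"
    and g: "g \<in> monoms n" "\<exists>j<n. M \<le> lk g j" and d: "d \<in> monoms n"
  shows "\<phi> (mn (g + d)) = mn d * \<phi> (mn g)"
  using d
proof (rule monoms_induct)
  show "\<phi> (mn (g + 0)) = mn 0 * \<phi> (mn g)" by simp
next
  fix d j assume d: "d \<in> monoms n" "j < n" "\<phi> (mn (g + d)) = mn d * \<phi> (mn g)"
  have o: "\<exists>j<n. M \<le> lk (g + d) j" using g(2) by (auto simp: lookup_add)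
  have "\<phi> (mn (g + (d + sg j 1))) = \<phi> (mn ((g + d) + sg j 1))" by (simp add: add.assoc)
  also have "\<dots> = mn (sg j 1) * \<phi> (mn (g + d))" using H[rule_format, OF _ d(2) o] g d by simp
  also have "\<dots> = mn (d + sg j 1) * \<phi> (mn g)" using d(3) by (simp add: mn_mult[symmetric] mult.assoc mult.commute)
  finally show "\<phi> (mn (g + (d + sg j 1))) = mn (d + sg j 1) * \<phi> (mn g)" .
qed

lemma get_M:
  assumes \<phi>: "\<phi> \<in> EndK n" and c: "\<forall>i<n. commut (xop n i) \<phi> \<in> Fn n"
  shows "\<exists>M\<ge>1. \<forall>g i. g \<in> monoms n \<longrightarrow> i < n \<longrightarrow> (\<exists>j<n. M \<le> lk g j) \<longrightarrow> \<phi> (mn (g + sg i 1)) = mn (sg i 1) * \<phi> (mn g)"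
proof -
  have "\<forall>i<n. \<exists>C. finite C \<and> (\<forall>g\<in>monoms n. g \<notin> C \<longrightarrow> commut (xop n i) \<phi> (mn g) = 0)"
    using c Fn_fin by blast
  then obtain Cf where Cf: "\<And>i. i < n \<Longrightarrow> finite (Cf i) \<and> (\<forall>g\<in>monoms n. g \<notin> Cf i \<longrightarrow> commut (xop n i) \<phi> (mn g) = 0)"
    by metis
  define C where "C = (\<Union>i<n. Cf i)"
  have fC: "finite C" using Cf by (simp add: C_def)
  define M where "M = Suc (Max ((\<lambda>(g,j). lk g j) ` (C \<times> {..<n})))"
  have Mb: "lk g j < M" if "g \<in> C" "j < n" for g j
  proof -
    have "lk g j \<in> (\<lambda>(g,j). lk g j) ` (C \<times> {..<n})" using that by force
    then have "lk g j \<le> Max ((\<lambda>(g,j). lk g j) ` (C \<times> {..<n}))" using fC by simp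
    then show ?thesis by (simp add: M_def)
  qed
  have "\<phi> (mn (g + sg i 1)) = mn (sg i 1) * \<phi> (mn g)"
    if g: "g \<in> monoms n" "i < n" "\<exists>j<n. M \<le> lk g j" for g i
  proof -
    have "g \<notin> C" using g(3) Mb by (meson leD)
    then have "g \<notin> Cf i" using g(2) by (auto simp: C_def)
    then have "commut (xop n i) \<phi> (mn g) = 0" using Cf[OF g(2)] g(1) by blast
    then show ?thesis using commut_mn[OF \<phi> g(1) g(2)] by simp
  qed
  moreover have "M \<ge> 1" by (simp add: M_def)
  ultimately show ?thesis by blast
qed

lemma box_finite: "finite {g \<in> monoms n. \<forall>j<n. lk g j < M}"
proof -
  have "{g \<in> monoms n. \<forall>j<n. lk g j < M} \<subseteq> (\<lambda>f. \<Sum>j<n. sg j (f j)) ` (PiE {..<n} (\<lambda>_. {..<M}))"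
  proof
    fix g assume g: "g \<in> {g \<in> monoms n. \<forall>j<n. lk g j < M}"
    have "g = (\<Sum>j<n. sg j (restrict (lk g) {..<n} j))"
    proof (rule poly_mapping_eqI)
      fix k
      have "lk (\<Sum>j<n. sg j (restrict (lk g) {..<n} j)) k = (\<Sum>j<n. if j = k then lk g j else 0)"
        by (simp add: lookup_sum lookup_single when_def restrict_def)
      also have "\<dots> = lk g k" using g monoms_out[of g n k] by (auto simp: sum.delta)
      finally show "lk g k = lk (\<Sum>j<n. sg j (restrict (lk g) {..<n} j)) k" by simp
    qed
    moreover have "restrict (lk g) {..<n} \<in> PiE {..<n} (\<lambda>_. {..<M})" using g by auto
    ultimately show "g \<in> (\<lambda>f. \<Sum>j<n. sg j (f j)) ` (PiE {..<n} (\<lambda>_. {..<M}))" by blast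
  qed
  then show ?thesis by (rule finite_subset) (auto intro!: finite_imageI finite_PiE)
qed

lemma mn_cancel: "mn a * p = mn a * q \<Longrightarrow> p = (q :: 'k::field_char_0 pol)"
proof -
  assume a: "mn a * p = mn a * q"
  have "mn a \<noteq> (0 :: 'k pol)" by (metis one_neq_zero lookup_single_eq lookup_zero)
  then show ?thesis using a mult_left_cancel by blast
qed

definition cv :: "nat \<Rightarrow> nat \<Rightarrow> (nat \<Rightarrow>\<^sub>0 nat)" where "cv n M = (\<Sum>j<n. sg j M)"
lemma lk_cv: "lk (cv n M) k = (if k < n then M else 0)"
  by (simp add: cv_def lookup_sum lookup_single when_def)
lemma cv_monoms[simp]: "cv n M \<in> monoms n"
  by (simp add: monoms_iff lk_cv)

lemma agree_Fn:
  assumes "\<phi> \<in> EndK n" "\<chi> \<in> EndK n" "finite B"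
    "\<And>g. g \<in> monoms n \<Longrightarrow> g \<notin> B \<Longrightarrow> \<phi> (mn g) = \<chi> (mn g)"
  shows "op_diff \<phi> \<chi> \<in> Fn n" "\<phi> = op_add \<chi> (op_diff \<phi> \<chi>)"
proof -
  show "op_diff \<phi> \<chi> \<in> Fn n"
    using assms by (intro Fn_intro[of _ _ B] EndK_op_diff) (auto simp: op_diff_def)
  show "\<phi> = op_add \<chi> (op_diff \<phi> \<chi>)" by (simp add: op_add_def op_diff_def)
qed

lemma main_sub:
  assumes n: "n \<ge> 2" and \<phi>: "\<phi> \<in> EndK n" and c: "\<forall>i<n. commut (xop n i) \<phi> \<in> Fn n"
  shows "\<phi> \<in> PplusF n"
proof -
  obtain M where M1: "M \<ge> 1" and H: "\<forall>g i. g \<in> monoms n \<longrightarrow> i < n \<longrightarrow> (\<exists>j<n. M \<le> lk g j) \<longrightarrow> \<phi> (mn (g + sg i 1)) = mn (sg i 1) * \<phi> (mn g)"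
    using get_M[OF \<phi> c] by blast
  note sh = shift[of \<phi> n M, OF \<phi> H]
  define R where "R = \<phi> (mn (cv n M))"
  have RP: "R \<in> Pn n" using \<phi> by (simp add: R_def EndK_in)
  have Rk: "M \<le> lk b k" if b: "b \<in> ks R" and k: "k < n" for b k
  proof -
    define j where "j = (if k = 0 then 1 else (0::nat))"
    have j: "j < n" "j \<noteq> k" using n by (auto simp: j_def)
    have e: "cv n M = sg j M + (cv n M - sg j M)"
    proof (rule poly_mapping_eqI)
      fix i show "lk (cv n M) i = lk (sg j M + (cv n M - sg j M)) i"
        using j by (cases "i = j") (simp_all add: lk_cv lookup_add lookup_minus lookup_single)
    qed
    have "R = mn (cv n M - sg j M) * \<phi> (mn (sg j M))"
    proof -
      have o: "\<exists>ja<n. M \<le> lk (sg j M) ja" using j by (intro exI[of _ j]) simp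
      show ?thesis unfolding R_def by (subst e) (rule sh[OF _ o], simp_all add: j)
    qed
    then have "b \<in> ks (mn (cv n M - sg j M) * \<phi> (mn (sg j M)))" using b by simp
    then have "b \<in> {a + b | a b. a \<in> ks (mn (cv n M - sg j M) :: 'a pol) \<and> b \<in> ks (\<phi> (mn (sg j M)))}"
      using keys_mult by blast
    then obtain b2 where "b = (cv n M - sg j M) + b2" by auto
    then show ?thesis using j k by (simp add: lookup_add lookup_minus lk_cv lookup_single)
  qed
  define U where "U = (\<Sum>b\<in>ks R. sg (b - cv n M) (lk R b))"
  have UP: "U \<in> Pn n" unfolding U_def
  proof (rule Pn_sum)
    fix b assume "b \<in> ks R"
    then have "b \<in> monoms n" using Pn_keys[OF RP] by blast
    then show "sg (b - cv n M) (lk R b) \<in> Pn n" by simp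
  qed
  have RU: "R = mn (cv n M) * U"
  proof -
    have "mn (cv n M) * U = (\<Sum>b\<in>ks R. sg (cv n M + (b - cv n M)) (lk R b))"
      by (simp add: U_def sum_distrib_left mult_single)
    also have "\<dots> = (\<Sum>b\<in>ks R. sg b (lk R b))"
    proof (rule sum.cong)
      fix b assume b: "b \<in> ks R"
      have "cv n M + (b - cv n M) = b"
      proof (rule poly_mapping_eqI)
        fix k show "lk (cv n M + (b - cv n M)) k = lk b k"
          using Rk[OF b, of k] by (cases "k < n") (simp_all add: lookup_add lookup_minus lk_cv)
      qed
      then show "sg (cv n M + (b - cv n M)) (lk R b) = sg b (lk R b)" by simp
    qed simp
    also have "\<dots> = R" by (rule poly_expand[symmetric])
    finally show ?thesis by simp
  qed
  have agree: "\<phi> (mn g) = mult_op n U (mn g)" if g: "g \<in> monoms n" "\<exists>j<n. M \<le> lk g j" for g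
  proof -
    have o: "\<exists>j<n. M \<le> lk (cv n M) j" using n by (intro exI[of _ 0]) (simp add: lk_cv)
    have "mn (cv n M) * \<phi> (mn g) = \<phi> (mn (g + cv n M))" using sh[OF g] by simp
    also have "\<dots> = \<phi> (mn (cv n M + g))" by (simp add: add.commute)
    also have "\<dots> = mn g * R" using sh[OF cv_monoms o g(1)] by (simp add: R_def)
    also have "\<dots> = mn (cv n M) * (U * mn g)" by (simp add: RU mult.commute mult.left_commute)
    finally have "\<phi> (mn g) = U * mn g" by (rule mn_cancel)
    then show ?thesis using g by (simp add: mult_op_mn)
  qed
  have "op_diff \<phi> (mult_op n U) \<in> Fn n" "\<phi> = op_add (mult_op n U) (op_diff \<phi> (mult_op n U))"
  proof -
    have "\<phi> (mn g) = mult_op n U (mn g)" if "g \<in> monoms n" "g \<notin> {g \<in> monoms n. \<forall>j<n. lk g j < M}" for g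
    proof -
      have "\<exists>j<n. M \<le> lk g j" using that by (auto simp: not_less)
      then show ?thesis using agree that(1) by blast
    qed
    then show "op_diff \<phi> (mult_op n U) \<in> Fn n" "\<phi> = op_add (mult_op n U) (op_diff \<phi> (mult_op n U))"
      using agree_Fn[OF \<phi> EndK_mult_op[OF UP] box_finite[of n M]] by blast+
  qed
  then show ?thesis unfolding PplusF_def using UP by blast
qed

lemma finite_shift_pre: "finite C \<Longrightarrow> finite {g. g + sg i 1 \<in> (C :: (nat \<Rightarrow>\<^sub>0 nat) set)}"
  by (rule finite_vimageI[where h = "\<lambda>g. g + sg i 1", unfolded vimage_def]) (auto simp: inj_on_def)

lemma commut_EndK: "a \<in> EndK n \<Longrightarrow> \<phi> \<in> EndK n \<Longrightarrow> commut a \<phi> \<in> EndK n"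
  unfolding commut_def by (intro EndK_op_diff EndK_comp)

lemma main_sup:
  assumes \<phi>: "\<phi> \<in> PplusF n"
  shows "\<phi> \<in> EndK n" "\<forall>i<n. commut (xop n i) \<phi> \<in> Fn n"
proof -
  obtain a f where a: "a \<in> Pn n" and f: "f \<in> Fn n" and \<phi>e: "\<phi> = op_add (mult_op n a) f"
    using \<phi> unfolding PplusF_def by blast
  show E: "\<phi> \<in> EndK n" unfolding \<phi>e by (intro EndK_op_add EndK_mult_op a Fn_EndK f)
  obtain C where C: "finite C" "\<And>g. g \<in> monoms n \<Longrightarrow> g \<notin> C \<Longrightarrow> f (mn g) = 0" using Fn_fin[OF f] by blast
  show "\<forall>i<n. commut (xop n i) \<phi> \<in> Fn n"
  proof (intro allI impI)
    fix i assume i: "i < n"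
    show "commut (xop n i) \<phi> \<in> Fn n"
    proof (rule Fn_intro[of _ _ "C \<union> {g. g + sg i 1 \<in> C}"])
      show "commut (xop n i) \<phi> \<in> EndK n" by (intro commut_EndK EndK_xop i E)
      show "finite (C \<union> {g. g + sg i 1 \<in> C})" using C(1) finite_shift_pre by blast
      fix g assume g: "g \<in> monoms n" "g \<notin> C \<union> {g. g + sg i 1 \<in> C}"
      have "f (mn g) = 0" "f (mn (g + sg i 1)) = 0" using g C(2) i by auto
      have "commut (xop n i) \<phi> (mn g) = mn (sg i 1) * \<phi> (mn g) - \<phi> (mn (g + sg i 1))"
        by (rule commut_mn[OF E g(1) i])
      also have "\<dots> = mn (sg i 1) * (a * mn g + f (mn g)) - (a * mn (g + sg i 1) + f (mn (g + sg i 1)))"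
        using g i by (simp add: \<phi>e op_add_def mult_op_mn)
      also have "\<dots> = 0" using \<open>f (mn g) = 0\<close> \<open>f (mn (g + sg i 1)) = 0\<close>
        by (simp add: mn_mult[symmetric] algebra_simps)
      finally show "commut (xop n i) \<phi> (mn g) = 0" .
    qed
  qed
qed

lemma Sn_EndK: "f \<in> Sn n \<Longrightarrow> f \<in> EndK n"
proof (induction rule: Sn.induct)
  case S_one then show ?case by (rule EndK_idop)
next
  case (S_x i) then show ?case by (rule EndK_xop)
next
  case (S_y i) show ?case by (rule EndK_yop)
next
  case (S_add f g) show ?case by (rule EndK_op_add[OF S_add.IH])
next
  case (S_smul f c) show ?case by (rule EndK_op_smul[OF S_smul.IH])
next
  case (S_comp f g) show ?case by (rule EndK_comp[OF S_comp.IH])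
qed

definition rowfin :: "nat \<Rightarrow> ('k::field_char_0 pol \<Rightarrow> 'k pol) \<Rightarrow> bool" where
  "rowfin n f = (\<forall>b. finite {g \<in> monoms n. b \<in> ks (f (mn g))})"

lemma rowfinI:
  assumes "\<And>b. \<exists>F. finite F \<and> {g \<in> monoms n. b \<in> ks (f (mn g))} \<subseteq> F"
  shows "rowfin n f"
  unfolding rowfin_def
proof
  fix b
  obtain F where F: "finite F" "{g \<in> monoms n. b \<in> ks (f (mn g))} \<subseteq> F" using assms by blast
  show "finite {g \<in> monoms n. b \<in> ks (f (mn g))}" using finite_subset[OF F(2) F(1)] .
qed

lemma rowfin_idop: "rowfin n (idop n)"
proof -
  have "\<And>b. {g \<in> monoms n. b \<in> ks (idop n (mn g) :: 'a pol)} \<subseteq> {b}" by auto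
  then show ?thesis by (intro rowfinI, rule_tac x="{b}" in exI) simp
qed

lemma rowfin_xop: "rowfin n (xop n i)"
proof (rule rowfinI)
  fix b
  show "\<exists>F. finite F \<and> {g \<in> monoms n. b \<in> ks (xop n i (mn g) :: 'a pol)} \<subseteq> F"
  proof (intro exI conjI)
    show "finite {g. g + sg i 1 \<in> {b}}" by (rule finite_shift_pre) simp
    show "{g \<in> monoms n. b \<in> ks (xop n i (mn g) :: 'a pol)} \<subseteq> {g. g + sg i 1 \<in> {b}}"
      by (auto simp: xop_mn)
  qed
qed

lemma rowfin_yop: "rowfin n (yop n i)"
proof -
  have "\<And>b. {g \<in> monoms n. b \<in> ks (yop n i (mn g) :: 'a pol)} \<subseteq> {b + sg i 1}"
  proof
    fix b g assume g: "g \<in> {g \<in> monoms n. b \<in> ks (yop n i (mn g) :: 'a pol)}"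
    then have gi: "0 < lk g i" "b = g - sg i 1" by (auto simp: yop_mn split: if_splits)
    have "g = b + sg i 1"
    proof (rule poly_mapping_eqI)
      fix k show "lk g k = lk (b + sg i 1) k"
        using gi by (cases "k = i") (simp_all add: lookup_add lookup_minus lookup_single)
    qed
    then show "g \<in> {b + sg i 1}" by simp
  qed
  then show ?thesis by (intro rowfinI, rule_tac x="{b + sg i 1}" in exI) simp
qed

lemma rowfin_add: "rowfin n f \<Longrightarrow> rowfin n g \<Longrightarrow> rowfin n (op_add f g)"
proof -
  assume a: "rowfin n f" "rowfin n g"
  have "\<And>b. {x \<in> monoms n. b \<in> ks (op_add f g (mn x))} \<subseteq> {x \<in> monoms n. b \<in> ks (f (mn x))} \<union> {x \<in> monoms n. b \<in> ks (g (mn x))}"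
    using keys_add by (fastforce simp: op_add_def)
  then show ?thesis using a unfolding rowfin_def[of n f] rowfin_def[of n g]
    by (intro rowfinI, rule_tac x="{x \<in> monoms n. b \<in> ks (f (mn x))} \<union> {x \<in> monoms n. b \<in> ks (g (mn x))}" in exI) simp
qed

lemma rowfin_smul: "rowfin n f \<Longrightarrow> rowfin n (op_smul c f)"
proof -
  assume a: "rowfin n f"
  have "\<And>b. {x \<in> monoms n. b \<in> ks (op_smul c f (mn x))} \<subseteq> {x \<in> monoms n. b \<in> ks (f (mn x))}"
    using keys_smul by (fastforce simp: op_smul_def)
  then show ?thesis using a unfolding rowfin_def[of n f] rowfin_def[of n g]
    by (intro rowfinI, rule_tac x="{x \<in> monoms n. b \<in> ks (f (mn x))}" in exI) simp
qed

lemma rowfin_comp: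
  assumes f: "f \<in> EndK n" "rowfin n f" and g: "g \<in> EndK n" "rowfin n g"
  shows "rowfin n (f \<circ> g)"
  unfolding rowfin_def
proof
  fix b
  let ?A = "{a \<in> monoms n. b \<in> ks (f (mn a))}"
  have "{x \<in> monoms n. b \<in> ks ((f \<circ> g) (mn x))} \<subseteq> (\<Union>a\<in>?A. {x \<in> monoms n. a \<in> ks (g (mn x))})"
  proof
    fix x assume x: "x \<in> {x \<in> monoms n. b \<in> ks ((f \<circ> g) (mn x))}"
    have gx: "g (mn x) \<in> Pn n" using x g by (simp add: EndK_in)
    have "f (g (mn x)) = (\<Sum>a\<in>ks (g (mn x)). smul (lk (g (mn x)) a) (f (mn a)))"
      by (rule EndK_expand[OF f(1) gx])
    then have "b \<in> ks (\<Sum>a\<in>ks (g (mn x)). smul (lk (g (mn x)) a) (f (mn a)))" using x by simp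
    then have "b \<in> (\<Union>a\<in>ks (g (mn x)). ks (smul (lk (g (mn x)) a) (f (mn a))))"
      by (rule subsetD[OF keys_sum])
    then obtain a where a: "a \<in> ks (g (mn x))" "b \<in> ks (smul (lk (g (mn x)) a) (f (mn a)))" by blast
    then have a: "a \<in> ks (g (mn x))" "b \<in> ks (f (mn a))" using keys_smul by (blast, blast)
    have "a \<in> monoms n" using Pn_keys[OF gx a(1)] .
    then show "x \<in> (\<Union>a\<in>?A. {x \<in> monoms n. a \<in> ks (g (mn x))})" using a x by blast
  qed
  moreover have "finite (\<Union>a\<in>?A. {x \<in> monoms n. a \<in> ks (g (mn x))})"
    using f(2) g(2) unfolding rowfin_def by (intro finite_UN_I) auto
  ultimately show "finite {x \<in> monoms n. b \<in> ks ((f \<circ> g) (mn x))}" by (rule finite_subset)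
qed

lemma Sn_rowfin: "f \<in> Sn n \<Longrightarrow> rowfin n f"
proof (induction rule: Sn.induct)
  case S_one then show ?case by (rule rowfin_idop)
next
  case (S_x i) show ?case by (rule rowfin_xop)
next
  case (S_y i) show ?case by (rule rowfin_yop)
next
  case (S_add f g) show ?case by (rule rowfin_add[OF S_add.IH])
next
  case (S_smul f c) show ?case by (rule rowfin_smul[OF S_smul.IH])
next
  case (S_comp f g) show ?case by (rule rowfin_comp[OF Sn_EndK[OF S_comp.hyps(1)] S_comp.IH(1) Sn_EndK[OF S_comp.hyps(2)] S_comp.IH(2)])
qed

lemma Fn_comp_left: "\<phi> \<in> EndK n \<Longrightarrow> \<psi> \<in> Fn n \<Longrightarrow> \<phi> \<circ> \<psi> \<in> Fn n"
proof -
  assume a: "\<phi> \<in> EndK n" "\<psi> \<in> Fn n"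
  obtain C where C: "finite C" "\<And>g. g \<in> monoms n \<Longrightarrow> g \<notin> C \<Longrightarrow> \<psi> (mn g) = 0" using Fn_fin[OF a(2)] by blast
  show ?thesis
    by (rule Fn_intro[OF EndK_comp[OF a(1) Fn_EndK[OF a(2)]] C(1)]) (simp add: C(2) EndK_zero[OF a(1)])
qed

lemma Fn_comp_right:
  assumes \<psi>: "\<psi> \<in> Fn n" and \<chi>: "\<chi> \<in> EndK n" "rowfin n \<chi>"
  shows "\<psi> \<circ> \<chi> \<in> Fn n"
proof -
  obtain C where C: "finite C" "\<And>g. g \<in> monoms n \<Longrightarrow> g \<notin> C \<Longrightarrow> \<psi> (mn g) = 0" using Fn_fin[OF \<psi>] by blast
  let ?C = "\<Union>b\<in>C. {g \<in> monoms n. b \<in> ks (\<chi> (mn g))}"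
  show ?thesis
  proof (rule Fn_intro[of _ _ ?C])
    show "\<psi> \<circ> \<chi> \<in> EndK n" by (intro EndK_comp Fn_EndK \<psi> \<chi>)
    show "finite ?C" using C(1) \<chi>(2) unfolding rowfin_def by (intro finite_UN_I) auto
    fix g assume g: "g \<in> monoms n" "g \<notin> ?C"
    have cx: "\<chi> (mn g) \<in> Pn n" using g \<chi> by (simp add: EndK_in)
    have "(\<psi> \<circ> \<chi>) (mn g) = (\<Sum>a\<in>ks (\<chi> (mn g)). smul (lk (\<chi> (mn g)) a) (\<psi> (mn a)))"
      using EndK_expand[OF Fn_EndK[OF \<psi>] cx] by simp
    also have "\<dots> = 0"
    proof (rule sum.neutral, rule ballI)
      fix a assume a: "a \<in> ks (\<chi> (mn g))"
      then have "a \<notin> C" using g by blast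
      moreover have "a \<in> monoms n" using Pn_keys[OF cx a] .
      ultimately show "smul (lk (\<chi> (mn g)) a) (\<psi> (mn a)) = 0" using C(2) by simp
    qed
    finally show "(\<psi> \<circ> \<chi>) (mn g) = 0" .
  qed
qed

lemma Fn_add: "\<psi>1 \<in> Fn n \<Longrightarrow> \<psi>2 \<in> Fn n \<Longrightarrow> op_add \<psi>1 \<psi>2 \<in> Fn n"
proof -
  assume a: "\<psi>1 \<in> Fn n" "\<psi>2 \<in> Fn n"
  obtain C1 where C1: "finite C1" "\<And>g. g \<in> monoms n \<Longrightarrow> g \<notin> C1 \<Longrightarrow> \<psi>1 (mn g) = 0" using Fn_fin[OF a(1)] by blast
  obtain C2 where C2: "finite C2" "\<And>g. g \<in> monoms n \<Longrightarrow> g \<notin> C2 \<Longrightarrow> \<psi>2 (mn g) = 0" using Fn_fin[OF a(2)] by blast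
  show ?thesis
  proof (rule Fn_intro[of _ _ "C1 \<union> C2"])
    show "op_add \<psi>1 \<psi>2 \<in> EndK n" by (intro EndK_op_add Fn_EndK a)
  qed (use C1 C2 in \<open>auto simp: op_add_def\<close>)
qed

lemma Fn_smul: "\<psi> \<in> Fn n \<Longrightarrow> op_smul c \<psi> \<in> Fn n"
proof -
  assume a: "\<psi> \<in> Fn n"
  obtain C where C: "finite C" "\<And>g. g \<in> monoms n \<Longrightarrow> g \<notin> C \<Longrightarrow> \<psi> (mn g) = 0" using Fn_fin[OF a] by blast
  show ?thesis
  proof (rule Fn_intro[of _ _ C])
    show "op_smul c \<psi> \<in> EndK n" by (intro EndK_op_smul Fn_EndK a)
  qed (use C in \<open>auto simp: op_smul_def\<close>)
qed

lemma commut_comp: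
  assumes a: "a \<in> EndK n" and f: "f \<in> EndK n" and g: "g \<in> EndK n"
  shows "commut a (f \<circ> g) = op_add (commut a f \<circ> g) (f \<circ> commut a g)"
proof
  fix p
  show "commut a (f \<circ> g) p = op_add (commut a f \<circ> g) (f \<circ> commut a g) p"
  proof (cases "p \<in> Pn n")
    case True
    have "f (a (g p) - g (a p)) = f (a (g p)) - f (g (a p))"
      using True a g by (intro EndK_diff[OF f]) (simp_all add: EndK_in)
    then show ?thesis by (simp add: commut_def op_diff_def op_add_def)
  next
    case False
    then show ?thesis using a f g by (simp add: commut_def op_diff_def op_add_def EndK_out EndK_zero)
  qed
qed

lemma commut_add:
  assumes a: "a \<in> EndK n" and f: "f \<in> EndK n" and g: "g \<in> EndK n"
  shows "commut a (op_add f g) = op_add (commut a f) (commut a g)"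
proof
  fix p
  show "commut a (op_add f g) p = op_add (commut a f) (commut a g) p"
  proof (cases "p \<in> Pn n")
    case True
    have "a (f p + g p) = a (f p) + a (g p)"
      using True f g by (intro EndK_add[OF a]) (simp_all add: EndK_in)
    then show ?thesis by (simp add: commut_def op_diff_def op_add_def)
  next
    case False
    then show ?thesis using a f g by (simp add: commut_def op_diff_def op_add_def EndK_out EndK_zero)
  qed
qed

lemma commut_smul:
  assumes a: "a \<in> EndK n" and f: "f \<in> EndK n"
  shows "commut a (op_smul c f) = op_smul c (commut a f)"
proof
  fix p
  show "commut a (op_smul c f) p = op_smul c (commut a f) p"
  proof (cases "p \<in> Pn n")
    case True
    have "a (smul c (f p)) = smul c (a (f p))"
      using True f by (intro EndK_smul[OF a]) (simp_all add: EndK_in)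
    then show ?thesis by (simp add: commut_def op_diff_def op_smul_def smul_diff)
  next
    case False
    then show ?thesis using a f by (simp add: commut_def op_diff_def op_smul_def EndK_out EndK_zero)
  qed
qed

lemma mono1: "b \<in> monoms 1 \<Longrightarrow> b = sg 0 (lk b 0)"
proof (rule poly_mapping_eqI)
  fix k assume b: "b \<in> monoms 1"
  show "lk b k = lk (sg 0 (lk b 0)) k"
  proof (cases "k = 0")
    case False
    then have "lk b k = 0" using monoms_out[OF b, of k] by simp
    then show ?thesis using False by (simp add: lookup_single)
  qed simp
qed

lemma mono1_nz: "b \<in> monoms 1 \<Longrightarrow> b \<noteq> 0 \<Longrightarrow> 0 < lk b 0"
proof (rule ccontr)
  assume b: "b \<in> monoms 1" "b \<noteq> 0" "\<not> 0 < lk b 0"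
  then have "b = sg 0 0" using mono1[OF b(1)] by simp
  then show False using b(2) by simp
qed

lemma commut_gen:
  assumes f: "f \<in> EndK 1" and z: "\<And>g. g \<in> monoms 1 \<Longrightarrow> g \<noteq> 0 \<Longrightarrow> mn (sg 0 1) * f (mn g) = f (mn (g + sg 0 1))"
  shows "commut (xop 1 0) f \<in> Fn 1"
proof (rule Fn_intro[of _ _ "{0}"])
  show "commut (xop 1 0) f \<in> EndK 1" by (intro commut_EndK EndK_xop f) simp
  fix g :: "nat \<Rightarrow>\<^sub>0 nat" assume g: "g \<in> monoms 1" "g \<notin> {0}"
  then show "commut (xop 1 0) f (mn g) = 0" using commut_mn[OF f g(1)] z[OF g(1)] by simp
qed simp

lemma commut_x_idop: "commut (xop 1 0) (idop 1) \<in> (Fn 1 :: ('k::field_char_0 pol \<Rightarrow> 'k pol) set)"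
  by (rule commut_gen[OF EndK_idop]) (simp add: mn_mult add.commute)

lemma commut_x_x: "commut (xop 1 0) (xop 1 0) \<in> (Fn 1 :: ('k::field_char_0 pol \<Rightarrow> 'k pol) set)"
  by (rule commut_gen[OF EndK_xop]) (simp_all add: xop_mn mn_mult add.commute)

lemma commut_x_y: "commut (xop 1 0) (yop 1 0) \<in> (Fn 1 :: ('k::field_char_0 pol \<Rightarrow> 'k pol) set)"
proof (rule commut_gen[OF EndK_yop])
  fix g :: "nat \<Rightarrow>\<^sub>0 nat" assume g: "g \<in> monoms 1" "g \<noteq> 0"
  have p: "0 < lk g 0" using mono1_nz[OF g] .
  have e1: "sg 0 1 + (g - sg 0 1) = g"
  proof (rule poly_mapping_eqI)
    fix k show "lk (sg 0 1 + (g - sg 0 1)) k = lk g k"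
      using p by (cases "k = 0") (simp_all add: lookup_add lookup_minus lookup_single)
  qed
  have e2: "g + sg 0 1 - sg 0 1 = g"
    by (rule poly_mapping_eqI) (simp add: lookup_add lookup_minus)
  have "mn (sg 0 1) * yop 1 0 (mn g) = (mn g :: 'k pol)"
    using g p e1 by (simp add: yop_mn mn_mult)
  moreover have "yop 1 0 (mn (g + sg 0 1)) = (mn g :: 'k pol)"
    using g by (simp add: yop_mn lookup_add e2)
  ultimately show "mn (sg 0 1) * yop 1 0 (mn g) = (yop 1 0 (mn (g + sg 0 1)) :: 'k pol)" by simp
qed

lemma Sn1_commut: "f \<in> Sn 1 \<Longrightarrow> commut (xop 1 0) f \<in> Fn 1"
proof (induction rule: Sn.induct)
  case S_one show ?case by (rule commut_x_idop)
next
  case (S_x i) then have "i = 0" by simp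
  then show ?case using commut_x_x by simp
next
  case (S_y i) then have "i = 0" by simp
  then show ?case using commut_x_y by simp
next
  case (S_add f g)
  have "commut (xop 1 0) (op_add f g) = op_add (commut (xop 1 0) f) (commut (xop 1 0) g)"
    by (rule commut_add[OF EndK_xop Sn_EndK[OF S_add.hyps(1)] Sn_EndK[OF S_add.hyps(2)]]) simp
  then show ?case using Fn_add[OF S_add.IH] by simp
next
  case (S_smul f c)
  have "commut (xop 1 0) (op_smul c f) = op_smul c (commut (xop 1 0) f)"
    by (rule commut_smul[OF EndK_xop Sn_EndK[OF S_smul.hyps(1)]]) simp
  then show ?case using Fn_smul[OF S_smul.IH] by simp
next
  case (S_comp f g)
  have fE: "f \<in> EndK 1" and gE: "g \<in> EndK 1" using Sn_EndK S_comp.hyps by auto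
  have "commut (xop 1 0) (f \<circ> g) = op_add (commut (xop 1 0) f \<circ> g) (f \<circ> commut (xop 1 0) g)"
    by (rule commut_comp[OF EndK_xop fE gE]) simp
  moreover have "commut (xop 1 0) f \<circ> g \<in> Fn 1"
    by (rule Fn_comp_right[OF S_comp.IH(1) gE Sn_rowfin[OF S_comp.hyps(2)]])
  moreover have "f \<circ> commut (xop 1 0) g \<in> Fn 1"
    by (rule Fn_comp_left[OF fE S_comp.IH(2)])
  ultimately have "op_add (commut (xop 1 0) f \<circ> g) (f \<circ> commut (xop 1 0) g) \<in> Fn 1" 
    "commut (xop 1 0) (f \<circ> g) = op_add (commut (xop 1 0) f \<circ> g) (f \<circ> commut (xop 1 0) g)"
    using Fn_add by blast+
  then show ?case by (simp only:)
qed

lemma Sn_zero: "(\<lambda>p. 0) \<in> (Sn n :: ('k::field_char_0 pol \<Rightarrow> 'k pol) set)"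
proof -
  have "op_smul 0 (idop n :: 'k pol \<Rightarrow> 'k pol) = (\<lambda>p. 0)" by (simp add: op_smul_def fun_eq_iff)
  moreover have "op_smul 0 (idop n :: 'k pol \<Rightarrow> 'k pol) \<in> Sn n" by (intro Sn.S_smul Sn.S_one)
  ultimately show ?thesis by simp
qed

lemma Sn_sumf: "finite S \<Longrightarrow> (\<And>s. s \<in> S \<Longrightarrow> F s \<in> Sn n) \<Longrightarrow> (\<lambda>p. \<Sum>s\<in>S. F s p) \<in> Sn n"
proof (induction S rule: finite_induct)
  case empty then show ?case using Sn_zero by simp
next
  case (insert x S)
  have "(\<lambda>p. \<Sum>s\<in>insert x S. F s p) = op_add (F x) (\<lambda>p. \<Sum>s\<in>S. F s p)"
    using insert(1,2) by (simp add: op_add_def fun_eq_iff)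
  moreover have "op_add (F x) (\<lambda>p. \<Sum>s\<in>S. F s p) \<in> Sn n"
    using insert by (intro Sn.S_add) auto
  ultimately show ?case by simp
qed

lemma Sn_funpow: "f \<in> Sn n \<Longrightarrow> g \<in> Sn n \<Longrightarrow> (f ^^ k) \<circ> g \<in> Sn n"
proof (induction k)
  case 0 then show ?case by simp
next
  case (Suc k)
  have "(f ^^ Suc k) \<circ> g = f \<circ> ((f ^^ k) \<circ> g)" by (simp add: comp_assoc)
  then show ?case using Suc Sn.S_comp by metis
qed

lemma Sn_diff: "f \<in> Sn n \<Longrightarrow> g \<in> Sn n \<Longrightarrow> op_diff f g \<in> Sn n"
proof -
  assume a: "f \<in> Sn n" "g \<in> Sn n"
  have "op_diff f g = op_add f (op_smul (-1) g)"
    by (simp add: op_diff_def op_add_def op_smul_def smul_minus1 fun_eq_iff)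
  then show ?thesis using a by (simp add: Sn.S_add Sn.S_smul)
qed

lemma Sn_E1: "i < n \<Longrightarrow> E1 n k l i \<in> Sn n"
  unfolding E1_def comp_assoc
  by (intro Sn_diff Sn_funpow Sn.S_x Sn.S_y Sn.S_one)

lemma Sn_foldr: "set L \<subseteq> {..<n} \<Longrightarrow> foldr (\<lambda>i f. E1 n (lk a i) (lk b i) i \<circ> f) L (idop n) \<in> (Sn n :: ('k::field_char_0 pol \<Rightarrow> 'k pol) set)"
proof (induction L)
  case Nil then show ?case by (simp add: Sn.S_one)
next
  case (Cons i L)
  then have "i < n" by simp
  then have E: "E1 n (lk a i) (lk b i) i \<in> (Sn n :: ('k pol \<Rightarrow> 'k pol) set)" by (rule Sn_E1)
  have e: "foldr (\<lambda>i f. E1 n (lk a i) (lk b i) i \<circ> f) (i # L) (idop n)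
     = E1 n (lk a i) (lk b i) i \<circ> foldr (\<lambda>i f. E1 n (lk a i) (lk b i) i \<circ> f) L (idop n)" by simp
  from Cons.prems have "set L \<subseteq> {..<n}" by simp
  with Cons.IH have "foldr (\<lambda>i f. E1 n (lk a i) (lk b i) i \<circ> f) L (idop n) \<in> (Sn n :: ('k pol \<Rightarrow> 'k pol) set)" by blast
  then show ?case unfolding e using Sn.S_comp E by blast
qed

lemma Sn_Eab: "Eab n a b \<in> Sn n"
  unfolding Eab_def by (rule Sn_foldr) auto

lemma Fn_Sn: "\<psi> \<in> Fn n \<Longrightarrow> \<psi> \<in> Sn n"
proof -
  assume "\<psi> \<in> Fn n"
  then obtain S c where \<psi>: "\<psi> = (\<lambda>p. \<Sum>ab\<in>S. smul (c ab) (Eab n (fst ab) (snd ab) p))"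
    and S: "finite S" unfolding Fn_def by blast
  have "(\<lambda>p. \<Sum>ab\<in>S. op_smul (c ab) (Eab n (fst ab) (snd ab)) p) \<in> Sn n"
    using S by (rule Sn_sumf) (intro Sn.S_smul Sn_Eab)
  then show ?thesis unfolding \<psi> op_smul_def .
qed

lemma Sn_mult_op1:
  assumes U: "U \<in> Pn 1"
  shows "mult_op 1 U \<in> Sn 1"
proof -
  define F where "F = (\<lambda>p. \<Sum>b\<in>ks U. op_smul (lk U b) ((xop 1 0 ^^ lk b 0) \<circ> idop 1) p)"
  have FS: "F \<in> Sn 1" unfolding F_def
    by (rule Sn_sumf) (auto intro!: Sn.S_smul Sn_funpow Sn.S_x Sn.S_one)
  have "mult_op 1 U = F"
  proof (rule EndK_ext[OF EndK_mult_op[OF U] Sn_EndK[OF FS]])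
    fix g :: "nat \<Rightarrow>\<^sub>0 nat" assume g: "g \<in> monoms 1"
    have "mult_op 1 U (mn g) = (\<Sum>b\<in>ks U. sg b (lk U b)) * mn g"
      using g by (simp add: mult_op_mn poly_expand[of U, symmetric])
    also have "\<dots> = (\<Sum>b\<in>ks U. sg (b + g) (lk U b))"
      by (simp add: sum_distrib_right mult_single)
    also have "\<dots> = F (mn g)"
      unfolding F_def op_smul_def
    proof (rule sum.cong)
      fix b assume b: "b \<in> ks U"
      have bm: "b \<in> monoms 1" using Pn_keys[OF U b] .
      have "((xop 1 0 ^^ lk b 0) \<circ> idop 1) (mn g) = mn (g + sg 0 (lk b 0))"
        using g by (simp add: xpow_mn)
      also have "\<dots> = mn (b + g)" using mono1[OF bm] by (simp add: add.commute)
      finally have h: "((xop 1 0 ^^ lk b 0) \<circ> idop 1) (mn g) = mn (b + g)" .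
      show "sg (b + g) (lk U b) = smul (lk U b) (((xop 1 0 ^^ lk b 0) \<circ> idop 1) (mn g))"
        by (simp only: h smul_single mult_1_right)
    qed simp
    finally show "mult_op 1 U (mn g) = F (mn g)" .
  qed
  then show ?thesis using FS by simp
qed

lemma main1:
  assumes \<phi>: "\<phi> \<in> EndK 1" and c: "\<forall>i<1. commut (xop 1 i) \<phi> \<in> Fn 1"
  shows "\<phi> \<in> Sn 1"
proof -
  obtain M where M1: "M \<ge> 1" and H: "\<forall>g i. g \<in> monoms 1 \<longrightarrow> i < 1 \<longrightarrow> (\<exists>j<1. M \<le> lk g j) \<longrightarrow> \<phi> (mn (g + sg i 1)) = mn (sg i 1) * \<phi> (mn g)"
    using get_M[OF \<phi> c] by blast
  note sh = shift[of \<phi> 1 M, OF \<phi> H]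
  define Me :: "nat \<Rightarrow>\<^sub>0 nat" where "Me = sg 0 M"
  define R where "R = \<phi> (mn Me)"
  have RP: "R \<in> Pn 1" using \<phi> by (simp add: R_def Me_def EndK_in)
  have o1: "g \<in> monoms 1 \<Longrightarrow> lk g k \<noteq> 0 \<Longrightarrow> k = 0" for g k
    using monoms_out[of g 1 k] by (cases k) auto
  have phig: "\<phi> (mn g) = mn (g - Me) * R" if g: "g \<in> monoms 1" "M \<le> lk g 0" for g
  proof -
    have e: "Me + (g - Me) = g"
    proof (rule poly_mapping_eqI)
      fix k show "lk (Me + (g - Me)) k = lk g k"
        using g by (cases "k = 0") (simp_all add: Me_def lookup_add lookup_minus lookup_single)
    qed
    have "\<exists>j<1. M \<le> lk Me j" by (simp add: Me_def)
    then have "\<phi> (mn (Me + (g - Me))) = mn (g - Me) * \<phi> (mn Me)"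
      using g by (intro sh) (simp_all add: Me_def)
    then show ?thesis using e by (simp add: R_def)
  qed
  define V where "V = {b \<in> ks R. lk b 0 < M}"
  define W where "W = {b \<in> ks R. M \<le> lk b 0}"
  have VW: "ks R = W \<union> V" "W \<inter> V = {}" "finite V" "finite W"
    by (auto simp: V_def W_def)
  define U where "U = (\<Sum>b\<in>W. sg (b - Me) (lk R b))"
  have UP: "U \<in> Pn 1" unfolding U_def
  proof (rule Pn_sum)
    fix b assume "b \<in> W"
    then have "b \<in> monoms 1" using Pn_keys[OF RP] by (auto simp: W_def)
    then show "sg (b - Me) (lk R b) \<in> Pn 1" by simp
  qed
  define Y where "Y = (\<lambda>p. \<Sum>b\<in>V. op_smul (lk R b) ((yop 1 0 ^^ (M - lk b 0)) \<circ> idop 1) p)"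
  have YS: "Y \<in> Sn 1" unfolding Y_def
    by (rule Sn_sumf[OF VW(3)]) (auto intro!: Sn.S_smul Sn_funpow Sn.S_y Sn.S_one)
  define \<chi> where "\<chi> = op_add (mult_op 1 U) Y"
  have \<chi>S: "\<chi> \<in> Sn 1" unfolding \<chi>_def by (intro Sn.S_add Sn_mult_op1 UP YS)
  have agree: "\<phi> (mn g) = \<chi> (mn g)" if g: "g \<in> monoms 1" "M \<le> lk g 0" for g
  proof -
    have bm: "b \<in> monoms 1" if "b \<in> ks R" for b using Pn_keys[OF RP that] .
    have "\<phi> (mn g) = mn (g - Me) * (\<Sum>b\<in>ks R. sg b (lk R b))"
      using phig[OF g] poly_expand[of R] by simp
    also have "\<dots> = (\<Sum>b\<in>ks R. sg (g - Me + b) (lk R b))"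
      by (simp add: sum_distrib_left mult_single)
    also have "\<dots> = (\<Sum>b\<in>W. sg (g - Me + b) (lk R b)) + (\<Sum>b\<in>V. sg (g - Me + b) (lk R b))"
      using VW by (simp add: sum.union_disjoint)
    also have "(\<Sum>b\<in>W. sg (g - Me + b) (lk R b)) = U * mn g"
      unfolding U_def sum_distrib_right mult_single
    proof (rule sum.cong)
      fix b assume b: "b \<in> W"
      then have b': "b \<in> monoms 1" "M \<le> lk b 0" using bm by (auto simp: W_def)
      have "g - Me + b = b - Me + g"
      proof (rule poly_mapping_eqI)
        fix k show "lk (g - Me + b) k = lk (b - Me + g) k"
        proof (cases "k = 0")
          case True then show ?thesis using g b' by (simp add: Me_def lookup_add lookup_minus)
        next
          case False
          then have "lk g k = 0" "lk b k = 0" using o1 g(1) b'(1) by blast+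
          then show ?thesis by (simp add: lookup_add lookup_minus)
        qed
      qed
      then show "sg (g - Me + b) (lk R b) = sg (b - Me + g) (lk R b * 1)" by simp
    qed simp
    also have "(\<Sum>b\<in>V. sg (g - Me + b) (lk R b)) = Y (mn g)"
      unfolding Y_def op_smul_def
    proof (rule sum.cong)
      fix b assume b: "b \<in> V"
      then have b': "b \<in> monoms 1" "lk b 0 < M" using bm by (auto simp: V_def)
      have "g - Me + b = g - sg 0 (M - lk b 0)"
      proof (rule poly_mapping_eqI)
        fix k show "lk (g - Me + b) k = lk (g - sg 0 (M - lk b 0)) k"
        proof (cases "k = 0")
          case True then show ?thesis using g b' by (simp add: Me_def lookup_add lookup_minus)
        next
          case False
          then have "lk g k = 0" "lk b k = 0" using o1 g(1) b'(1) by blast+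
          then show ?thesis using False by (simp add: lookup_add lookup_minus lookup_single)
        qed
      qed
      moreover have "M - lk b 0 \<le> lk g 0" using g by simp
      moreover have "((yop 1 0 ^^ (M - lk b 0)) \<circ> idop 1) (mn g) = mn (g - sg 0 (M - lk b 0))"
        using g b' \<open>M - lk b 0 \<le> lk g 0\<close> by (simp add: ypow_mn)
      ultimately show "sg (g - Me + b) (lk R b) = smul (lk R b) (((yop 1 0 ^^ (M - lk b 0)) \<circ> idop 1) (mn g))"
        by (metis smul_single mult_1_right)
    qed simp
    also have "U * mn g + Y (mn g) = \<chi> (mn g)"
      using g by (simp add: \<chi>_def op_add_def mult_op_mn)
    finally show ?thesis .
  qed
  have "op_diff \<phi> \<chi> \<in> Fn 1" "\<phi> = op_add \<chi> (op_diff \<phi> \<chi>)"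
  proof -
    have "\<phi> (mn g) = \<chi> (mn g)" if "g \<in> monoms 1" "g \<notin> {g \<in> monoms 1. \<forall>j<1. lk g j < M}" for g
    proof -
      have "M \<le> lk g 0" using that by (auto simp: not_less)
      then show ?thesis using agree that(1) by blast
    qed
    then show "op_diff \<phi> \<chi> \<in> Fn 1" "\<phi> = op_add \<chi> (op_diff \<phi> \<chi>)"
      using agree_Fn[OF \<phi> Sn_EndK[OF \<chi>S] box_finite[of 1 M]] by blast+
  qed
  then show ?thesis using Sn.S_add[OF \<chi>S Fn_Sn] by metis
qed

theorem corollary6p6:
  fixes n :: nat
  assumes "n \<ge> 1"
  shows "{\<phi> \<in> (EndK n :: ('k::field_char_0 pol \<Rightarrow> 'k pol) set).
            \<forall>i<n. commut (xop n i) \<phi> \<in> Fn n}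
         = (if n = 1 then Sn n else PplusF n)"
proof (cases "n = 1")
  case True
  have "\<forall>i<1. commut (xop 1 i) \<phi> \<in> Fn 1" if "\<phi> \<in> (Sn 1 :: ('k pol \<Rightarrow> 'k pol) set)" for \<phi>
    using Sn1_commut[OF that] by simp
  then show ?thesis using True main1 Sn_EndK by auto
next
  case False
  then have "n \<ge> 2" using assms by simp
  then show ?thesis using False main_sub main_sup by (auto simp del: One_nat_def) blast
qed

end
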